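(* The subgroup of $G$ consisting of those elements that fix $Q\in\Lambda^2H_\Gamma$ is generated by the standard dominated $Q$-transvections and the $Q$-inversions.
   Context: $\Gamma$ is a finite simplicial graph with vertex set $X$, $|X|=2g$, $A_\Gamma$ its right-angled Artin group ($x,y$ commute iff adjacent), $H_\Gamma$ its abelianization, $L=X\cup X^{-1}$, and for $u\in L$, $\bar u\in X$ is its vertex. $\mathrm{lk}(v)$ = neighbours of $v$, $\mathrm{st}(v)=\mathrm{lk}(v)\cup\{v\}$; domination $v\ge w$ iff $\mathrm{lk}(w)\subset\mathrm{st}(v)$, extended to letters via their vertices. Fix a bijection $u\mapsto u^*$ of $L$ with $(u^* )^*=u^{-1}$ and letters $a_1,\dots,a_g\in L$ such that the vertices of $a_1,\dots,a_g,a_1^*,\dots,a_g^*$ are all of $X$; let $Q=\sum\{[a_i]\wedge[a_i^*]: \bar a_i^*\text{ adjacent to }\bar a_i\}\in\Lambda^2H_\Gamma$ (with $\mathrm{Aut}\,H_\Gamma$ acting diagonally), and assume $Q\ne0$. $\mathrm{supp}\,Q\subset X$ is the set of vertices appearing in $Q$. A letter $u\in L$ also denotes its image in $H_\Gamma$ (so $x^{-1}\mapsto -x$). For $a,b\in L$ with $a\ge b$, $\bar a\neq\bar b$, $E_{a,b}\in\mathrm{Aut}\,H_\Gamma$ sends $b\mapsto b+a$ and fixes the images of all $x\in X$ other than $\bar b$; $N_a$ sends $a\mapsto -a$ and fixes images of all $x\in X\setminus\{\bar a\}$. $G\le\mathrm{Aut}\,H_\Gamma$ is generated by $\{E_{a,b}: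 a\in X, b\in\mathrm{supp}\,Q, a\ge b, a\ne b\}\cup\{N_b:b\in\mathrm{supp}\,Q\}$. A standard dominated $Q$-transvection is an element of one of the forms: (1) $E_{a,a^*}$ where $\bar a\in\mathrm{supp}\,Q$ and $a\ge a^*$; (2) $E_{a,b}E_{b^*,a^*}^{-1}$ where $\bar a,\bar b\in\mathrm{supp}\,Q$, $\bar a\neq \bar b$, $\bar{a^*}\ne\bar b$, $a\ge b$ and $b^*\ge a^*$. The $Q$-inversion for $\bar a\in\mathrm{supp}\,Q$ is $N_aN_{a^*}$. *)

theory Defs
  imports "HOL-Analysis.Analysis"
begin

text \<open>The vertex set X of the graph is the (finite) type 'v; the graph is an
  adjacency relation adj on 'v (symmetric, irreflexive).
  H_Gamma = Z^X is modelled by int^'v; Aut H_Gamma by invertible integer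
  matrices int^'v^'v acting on column vectors (A *v x).
  Letters L = X \<union> X^-1 are pairs (x, s) :: 'v \<times> bool, with s = True for x and
  s = False for x^-1.  The vertex of a letter u is fst u.
  Lambda^2 H_Gamma is modelled (canonically, for a free Z-module of finite rank)
  by skew-symmetric integer matrices: x \<and> y corresponds to x y^T - y x^T, and
  the diagonal action of A becomes M \<mapsto> A M A^T.\<close>

type_synonym 'v letter = "'v \<times> bool"

definition lsgn :: "'v letter \<Rightarrow> int" where
  "lsgn u = (if snd u then 1 else -1)"

definition linv :: "'v letter \<Rightarrow> 'v letter" where
  "linv u = (fst u, \<not> snd u)"

definition limg :: "'v letter \<Rightarrow> int^'v" where
  "limg u = (\<chi> i. if i = fst u then lsgn u else 0)"

definition wedge :: "int^'v \<Rightarrow> int^'v \<Rightarrow> int^'v^'v" where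
  "wedge x y = (\<chi> i j. x$i * y$j - y$i * x$j)"

definition act2 :: "int^'v^'v \<Rightarrow> int^'v^'v \<Rightarrow> int^'v^'v" where
  "act2 A M = A ** M ** transpose A"

definition suppW :: "int^'v^'v \<Rightarrow> 'v set" where
  "suppW M = {x. \<exists>y. M$x$y \<noteq> 0 \<or> M$y$x \<noteq> 0}"

definition is_graph :: "('v \<Rightarrow> 'v \<Rightarrow> bool) \<Rightarrow> bool" where
  "is_graph adj \<longleftrightarrow> (\<forall>x y. adj x y \<longrightarrow> adj y x) \<and> (\<forall>x. \<not> adj x x)"

text \<open>Domination v \<ge> w iff lk(w) \<subseteq> st(v).\<close>
definition vdom :: "('v \<Rightarrow> 'v \<Rightarrow> bool) \<Rightarrow> 'v \<Rightarrow> 'v \<Rightarrow> bool" where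
  "vdom adj v w \<longleftrightarrow> (\<forall>z. adj w z \<longrightarrow> adj v z \<or> z = v)"

definition ldom :: "('v \<Rightarrow> 'v \<Rightarrow> bool) \<Rightarrow> 'v letter \<Rightarrow> 'v letter \<Rightarrow> bool" where
  "ldom adj a b \<longleftrightarrow> vdom adj (fst a) (fst b)"

text \<open>E_{a,b}: sends b to b + a, fixes the other basis vectors (for fst a \<noteq> fst b).
  Column fst b is e_{fst b} + lsgn a * lsgn b * e_{fst a}.\<close>
definition Emat :: "'v letter \<Rightarrow> 'v letter \<Rightarrow> int^'v^'v" where
  "Emat a b = (\<chi> i j. if j = fst b \<and> i = fst a then lsgn a * lsgn b
                       else if i = j then 1 else 0)"

definition Nmat :: "'v letter \<Rightarrow> int^'v^'v" where
  "Nmat a = (\<chi> i j. if i = j then (if i = fst a then -1 else 1) else 0)"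

inductive_set mgen :: "(int^'v^'v) set \<Rightarrow> (int^'v^'v) set" for S where
  one: "mat 1 \<in> mgen S"
| mul: "s \<in> S \<Longrightarrow> g \<in> mgen S \<Longrightarrow> s ** g \<in> mgen S"
| mulinv: "s \<in> S \<Longrightarrow> g \<in> mgen S \<Longrightarrow> matrix_inv s ** g \<in> mgen S"

definition Qform :: "('v \<Rightarrow> 'v \<Rightarrow> bool) \<Rightarrow> ('v letter \<Rightarrow> 'v letter) \<Rightarrow> nat
    \<Rightarrow> (nat \<Rightarrow> 'v letter) \<Rightarrow> int^'v^'v" where
  "Qform adj st g a =
     (\<Sum>i\<in>{i. i < g \<and> adj (fst (st (a i))) (fst (a i))}. wedge (limg (a i)) (limg (st (a i))))"

definition Ggens :: "('v \<Rightarrow> 'v \<Rightarrow> bool) \<Rightarrow> int^'v^'v \<Rightarrow> (int^'v^'v) set" where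
  "Ggens adj Q =
     {Emat (x, True) (y, True) | x y. y \<in> suppW Q \<and> vdom adj x y \<and> x \<noteq> y}
     \<union> {Nmat (y, True) | y. y \<in> suppW Q}"

definition std_transv :: "('v \<Rightarrow> 'v \<Rightarrow> bool) \<Rightarrow> ('v letter \<Rightarrow> 'v letter)
    \<Rightarrow> int^'v^'v \<Rightarrow> (int^'v^'v) set" where
  "std_transv adj st Q =
     {Emat a (st a) | a. fst a \<in> suppW Q \<and> ldom adj a (st a)}
     \<union> {Emat a b ** matrix_inv (Emat (st b) (st a)) | a b.
          fst a \<in> suppW Q \<and> fst b \<in> suppW Q \<and> fst a \<noteq> fst b \<and> fst (st a) \<noteq> fst b
          \<and> ldom adj a b \<and> ldom adj (st b) (st a)}"

definition Q_inversions :: "('v letter \<Rightarrow> 'v letter) \<Rightarrow> int^'v^'v \<Rightarrow> (int^'v^'v) set" where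
  "Q_inversions st Q = {Nmat a ** Nmat (st a) | a. fst a \<in> suppW Q}"

end

theory Submission imports Defs begin

definition elem :: "'n::finite \<Rightarrow> 'n \<Rightarrow> int \<Rightarrow> int^'n^'n" where
  "elem i j c = (\<chi> r s. (if r = s then 1 else 0) + (if r = i \<and> s = j then c else 0))"

lemma mat1_entry: "(mat 1 :: int^'n^'n) $ r $ s = (if r = s then 1 else 0)"
  by (simp add: mat_def)

lemma elem_mult:
  fixes M :: "int^'n::finite^'n"
  shows "(elem i j c ** M) $ r $ s = M $ r $ s + (if r = i then c * M $ j $ s else 0)"
proof -
  have "(elem i j c ** M) $ r $ s = (\<Sum>k\<in>UNIV. (if r = k then M $ k $ s else 0) + (if r = i \<and> k = j then c * M $ k $ s else 0))"
    by (simp add: elem_def matrix_matrix_mult_def distrib_right) (rule sum.cong, auto)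
  also have "\<dots> = M $ r $ s + (if r = i then c * M $ j $ s else 0)"
    by (simp add: sum.distrib sum.delta)
  finally show ?thesis .
qed

lemma elem_entry: "elem i j c $ r $ s = (if r = s then 1 else 0) + (if r = i \<and> s = j then c else 0)"
  by (simp add: elem_def)

lemma elem_inv: "i \<noteq> j \<Longrightarrow> elem i j c ** elem i j (-c) = mat 1"
  by (simp add: vec_eq_iff elem_mult elem_entry mat1_entry)

lemma matrix_inv_eq:
  fixes A B :: "int^'n::finite^'n"
  assumes "A ** B = mat 1" "B ** A = mat 1"
  shows "matrix_inv A = B"
proof -
  have ex: "A ** matrix_inv A = mat 1 \<and> matrix_inv A ** A = mat 1"
    unfolding matrix_inv_def by (rule someI[of _ B]) (use assms in auto)
  have "matrix_inv A = matrix_inv A ** (A ** B)" using assms by simp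
  also have "\<dots> = (matrix_inv A ** A) ** B" by (simp add: matrix_mul_assoc)
  also have "\<dots> = B" using ex by simp
  finally show ?thesis .
qed

lemma matrix_inv_elem: "i \<noteq> j \<Longrightarrow> matrix_inv (elem i j c) = elem i j (-c)"
  by (rule matrix_inv_eq) (simp_all add: elem_inv elem_inv[of i j "-c", simplified])

lemma Emat_elem: "fst a \<noteq> fst b \<Longrightarrow> Emat a b = elem (fst a) (fst b) (lsgn a * lsgn b)"
  by (auto simp add: Emat_def elem_def vec_eq_iff)

lemma sum_if_mult: "(\<Sum>k\<in>(UNIV::'n::finite set). (if x = k then c else 0) * (f k::int)) = c * f x"
proof -
  have "(\<Sum>k\<in>(UNIV::'n set). (if x = k then c else 0) * f k) = (\<Sum>k\<in>UNIV. if x = k then c * f k else 0)"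
    by (rule sum.cong) auto
  then show ?thesis by simp
qed

lemma Nmat_mult:
  fixes M :: "int^'n::finite^'n"
  shows "(Nmat a ** M) $ r $ s = (if r = fst a then - M $ r $ s else M $ r $ s)"
proof -
  have "(Nmat a ** M) $ r $ s = (\<Sum>k\<in>UNIV. if r = k then (if r = fst a then - M $ r $ s else M $ r $ s) else 0)"
    unfolding Nmat_def matrix_matrix_mult_def by (auto simp: sum_if_mult)
  then show ?thesis by (simp add: sum.delta)
qed

lemma Nmat_entry: "Nmat a $ r $ s = (if r = s then (if r = fst a then -1 else 1) else 0)"
  by (simp add: Nmat_def)

lemma Nmat_sq: "Nmat a ** Nmat a = mat 1"
  by (simp add: vec_eq_iff Nmat_mult Nmat_entry mat1_entry)

lemma matrix_inv_Nmat: "matrix_inv (Nmat a) = Nmat a"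
  by (rule matrix_inv_eq) (simp_all add: Nmat_sq)

lemma mgen_mult: "A \<in> mgen S \<Longrightarrow> B \<in> mgen S \<Longrightarrow> A ** B \<in> mgen S"
proof (induction A rule: mgen.induct)
  case one then show ?case by (simp add: matrix_mul_lid)
next
  case (mul s g) then show ?case by (metis matrix_mul_assoc mgen.mul)
next
  case (mulinv s g) then show ?case by (metis matrix_mul_assoc mgen.mulinv)
qed

lemma mgen_gen: "s \<in> S \<Longrightarrow> s \<in> mgen S"
  using mgen.mul[OF _ mgen.one] by (simp add: matrix_mul_rid)

lemma mgen_geninv: "s \<in> S \<Longrightarrow> matrix_inv s \<in> mgen S"
  using mgen.mulinv[OF _ mgen.one] by (simp add: matrix_mul_rid)

lemma mgen_invex:
  fixes S :: "(int^'n::finite^'n) set"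
  assumes inv: "\<And>s. s \<in> S \<Longrightarrow> s ** matrix_inv s = mat 1 \<and> matrix_inv s ** s = mat 1"
  shows "A \<in> mgen S \<Longrightarrow> \<exists>B\<in>mgen S. A ** B = mat 1 \<and> B ** A = mat 1"
proof (induction A rule: mgen.induct)
  case one then show ?case by (intro bexI[of _ "mat 1"]) (auto simp: matrix_mul_lid mgen.one)
next
  case (mul s g)
  then obtain B where B: "B \<in> mgen S" "g ** B = mat 1" "B ** g = mat 1" by auto
  have "(s ** g) ** (B ** matrix_inv s) = s ** (g ** B) ** matrix_inv s" by (simp add: matrix_mul_assoc)
  also have "\<dots> = mat 1" using B inv[OF mul(1)] by (simp add: matrix_mul_rid)
  finally have 1: "(s ** g) ** (B ** matrix_inv s) = mat 1" .
  have "(B ** matrix_inv s) ** (s ** g) = B ** (matrix_inv s ** s) ** g" by (simp add: matrix_mul_assoc)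
  also have "\<dots> = mat 1" using B inv[OF mul(1)] by (simp add: matrix_mul_rid)
  finally have 2: "(B ** matrix_inv s) ** (s ** g) = mat 1" .
  show ?case using 1 2 mgen_mult[OF B(1) mgen_geninv[OF mul(1)]] by blast
next
  case (mulinv s g)
  then obtain B where B: "B \<in> mgen S" "g ** B = mat 1" "B ** g = mat 1" by auto
  have "(matrix_inv s ** g) ** (B ** s) = matrix_inv s ** (g ** B) ** s" by (simp add: matrix_mul_assoc)
  also have "\<dots> = mat 1" using B inv[OF mulinv(1)] by (simp add: matrix_mul_rid)
  finally have 1: "(matrix_inv s ** g) ** (B ** s) = mat 1" .
  have "(B ** s) ** (matrix_inv s ** g) = B ** (s ** matrix_inv s) ** g" by (simp add: matrix_mul_assoc)
  also have "\<dots> = mat 1" using B inv[OF mulinv(1)] by (simp add: matrix_mul_rid)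
  finally have 2: "(B ** s) ** (matrix_inv s ** g) = mat 1" .
  show ?case using 1 2 mgen_mult[OF B(1) mgen_gen[OF mulinv(1)]] by blast
qed

lemma mgen_cancel:
  fixes S :: "(int^'n::finite^'n) set"
  assumes inv: "\<And>s. s \<in> S \<Longrightarrow> s ** matrix_inv s = mat 1 \<and> matrix_inv s ** s = mat 1"
    and W: "W \<in> mgen S" and WM: "W ** M \<in> mgen S"
  shows "M \<in> mgen S"
proof -
  obtain B where B: "B \<in> mgen S" "W ** B = mat 1" "B ** W = mat 1" using mgen_invex[OF inv W] by auto
  have "M = B ** (W ** M)" using B by (simp add: matrix_mul_assoc matrix_mul_lid)
  then show ?thesis using mgen_mult[OF B(1) WM] by simp
qed

lemma mgen_mono:
  fixes S T :: "(int^'n::finite^'n) set"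
  assumes "\<And>s. s \<in> S \<Longrightarrow> s \<in> mgen T" "\<And>s. s \<in> S \<Longrightarrow> matrix_inv s \<in> mgen T"
  shows "A \<in> mgen S \<Longrightarrow> A \<in> mgen T"
proof (induction A rule: mgen.induct)
  case one then show ?case by (rule mgen.one)
next
  case (mul s g) then show ?case using assms mgen_mult by blast
next
  case (mulinv s g) then show ?case using assms mgen_mult by blast
qed

lemma mult_transpose_elem:
  fixes B :: "int^'n::finite^'n"
  shows "(B ** transpose (elem i j c)) $ r $ s = B $ r $ s + (if s = i then c * B $ r $ j else 0)"
proof -
  have "(B ** transpose (elem i j c)) $ r $ s = (\<Sum>k\<in>UNIV. (if s = k then B $ r $ k else 0) + (if s = i \<and> k = j then c * B $ r $ k else 0))"
    by (simp add: elem_def matrix_matrix_mult_def transpose_def distrib_left) (rule sum.cong, auto)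
  also have "\<dots> = B $ r $ s + (if s = i then c * B $ r $ j else 0)"
    by (simp add: sum.distrib sum.delta)
  finally show ?thesis .
qed

lemma act2_elem:
  fixes M :: "int^'n::finite^'n"
  shows "act2 (elem i j c) M $ r $ s = M $ r $ s + (if r = i then c * M $ j $ s else 0)
      + (if s = i then c * M $ r $ j else 0) + (if r = i \<and> s = i then c * c * M $ j $ j else 0)"
  unfolding act2_def by (simp add: mult_transpose_elem elem_mult algebra_simps)

lemma act2_mult: "act2 (A ** B) M = act2 A (act2 B M)"
  unfolding act2_def by (simp add: matrix_transpose_mul matrix_mul_assoc)

lemma act2_one: "act2 (mat 1) M = M"
  unfolding act2_def by (simp add: matrix_mul_lid matrix_mul_rid transpose_mat)

lemma Nmat_fst: "Nmat u = Nmat (fst u, True)"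
  unfolding Nmat_def fst_conv by (rule refl)

lemma sum_mult_if: "(\<Sum>k\<in>(UNIV::'n::finite set). (f k::int) * (if x = k then c else 0)) = f x * c"
proof -
  have "(\<Sum>k\<in>(UNIV::'n set). f k * (if x = k then c else 0)) = (\<Sum>k\<in>UNIV. if x = k then f k * c else 0)"
    by (rule sum.cong) auto
  then show ?thesis by simp
qed

lemma mult_transpose_Nmat:
  fixes B :: "int^'n::finite^'n"
  shows "(B ** transpose (Nmat a)) $ r $ s = (if s = fst a then - B $ r $ s else B $ r $ s)"
proof -
  have "(B ** transpose (Nmat a)) $ r $ s = (\<Sum>k\<in>UNIV. if s = k then (if s = fst a then - B $ r $ s else B $ r $ s) else 0)"
    unfolding Nmat_def matrix_matrix_mult_def transpose_def by (auto simp: sum_mult_if)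
  then show ?thesis by (simp add: sum.delta)
qed

lemma act2_Nmat:
  fixes M :: "int^'n::finite^'n"
  shows "act2 (Nmat a) M $ r $ s = (if r = fst a then -1 else 1) * (if s = fst a then -1 else 1) * M $ r $ s"
  unfolding act2_def by (simp add: mult_transpose_Nmat Nmat_mult)

locale setting =
  fixes adj :: "'v::finite \<Rightarrow> 'v \<Rightarrow> bool"
    and st :: "'v letter \<Rightarrow> 'v letter"
    and g :: nat
    and a :: "nat \<Rightarrow> 'v letter"
  assumes graph: "is_graph adj"
    and card: "CARD('v) = 2 * g"
    and stst: "\<And>u. st (st u) = linv u"
    and cover: "fst ` (a ` {..<g} \<union> st ` a ` {..<g}) = UNIV"
begin

definition p :: "'v \<Rightarrow> 'v" where "p x = fst (st (x, True))"
definition tau :: "'v \<Rightarrow> int" where "tau x = lsgn (x, True) * lsgn (st (x, True))"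
definition S :: "'v set" where "S = {x. adj x (p x)}"
abbreviation Q where "Q \<equiv> Qform adj st g a"

lemma adj_sym: "adj x y \<Longrightarrow> adj y x" using graph by (auto simp: is_graph_def)
lemma adj_irrefl: "\<not> adj x x" using graph by (auto simp: is_graph_def)

lemma st_linv: "st (linv u) = linv (st u)"
  using stst[of "st u"] arg_cong[OF stst[of u], of st] by simp

lemma linv_simps [simp]: "fst (linv u) = fst u" "linv (linv u) = u"
  by (auto simp: linv_def)

lemma linv_pair: "linv (x, b) = (x, \<not> b)" by (simp add: linv_def)

lemma st_False: "st (x, False) = linv (st (x, True))"
  using st_linv[of "(x, True)"] by (simp add: linv_def)

lemma fst_st: "fst (st (x, b)) = p x"
proof (cases b)
  case True then show ?thesis by (simp add: p_def)
next
  case False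
  then show ?thesis by (simp add: st_False p_def)
qed

lemma lsgn_simps [simp]: "lsgn (x, True) = 1" "lsgn (x, False) = -1" "lsgn (linv u) = - lsgn u"
  by (auto simp: lsgn_def linv_def)

lemma lsgn_st: "lsgn u * lsgn (st u) = tau (fst u)"
proof (cases u)
  case (Pair x b)
  show ?thesis
  proof (cases b)
    case True then show ?thesis using Pair by (simp add: tau_def)
  next
    case False
    then show ?thesis using Pair by (simp add: st_False tau_def)
  qed
qed

lemma st_pair: "st (x, b) = (p x, snd (st (x, b)))"
  using fst_st[of x b] by (metis prod.collapse)

lemma p_p [simp]: "p (p x) = x"
proof -
  have "fst (st (st (x, True))) = x" by (simp add: stst)
  then show ?thesis by (metis fst_st st_pair)
qed

lemma p_neq: "p x \<noteq> x"
proof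
  assume h: "p x = x"
  obtain b where b: "st (x, True) = (x, b)" using st_pair[of x True] h by auto
  show False
  proof (cases b)
    case True
    then have "st (st (x, True)) = (x, True)" using b by simp
    then show False using stst[of "(x, True)"] by (simp add: linv_pair)
  next
    case False
    then have "st (x, True) = linv (x, True)" using b by (simp add: linv_pair)
    then have "st (st (x, True)) = linv (st (x, True))" by (metis st_linv)
    then show False using stst[of "(x, True)"] b False by (simp add: linv_pair)
  qed
qed

lemma p_inj: "p x = p y \<longleftrightarrow> x = y" by (metis p_p)

lemma tau_p: "tau (p x) = - tau x"
proof -
  have "tau (p x) = lsgn (st (x, True)) * lsgn (st (st (x, True)))"
    using lsgn_st[of "st (x, True)"] by (simp add: fst_st)
  also have "\<dots> = - lsgn (st (x, True))" by (simp add: stst linv_pair)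
  also have "\<dots> = - tau x" by (simp add: tau_def)
  finally show ?thesis .
qed

lemma tau_pm: "tau x = 1 \<or> tau x = -1"
  by (auto simp: tau_def lsgn_def)

lemma tau_sq [simp]: "tau x * tau x = 1"
  using tau_pm[of x] by auto

lemma tau_nz [simp]: "tau x \<noteq> 0"
  using tau_pm[of x] by auto

lemma S_p: "p x \<in> S \<longleftrightarrow> x \<in> S"
  by (auto simp: S_def adj_sym)

definition u :: "nat \<Rightarrow> 'v" where "u i = fst (a i)"

lemma fst_st_a: "fst (st (a i)) = p (u i)"
  unfolding u_def by (metis fst_st prod.collapse)

lemma inj_F: "inj_on (\<lambda>(i, b). if b then u i else p (u i)) ({..<g} \<times> (UNIV :: bool set))"
proof (rule eq_card_imp_inj_on)
  show "finite ({..<g} \<times> (UNIV :: bool set))" by simp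
  have "(\<lambda>(i, b). if b then u i else p (u i)) ` ({..<g} \<times> (UNIV :: bool set)) = UNIV"
  proof -
    { fix x :: 'v
      have "x \<in> fst ` (a ` {..<g} \<union> st ` a ` {..<g})" using cover by simp
      then obtain i where "i < g" "x = u i \<or> x = p (u i)"
        using fst_st_a by (auto simp: u_def)
      then have "x \<in> (\<lambda>(i, b). if b then u i else p (u i)) ` ({..<g} \<times> (UNIV :: bool set))"
        by (auto intro: image_eqI[of _ _ "(i, True)"] image_eqI[of _ _ "(i, False)"]) }
    then show ?thesis by auto
  qed
  then show "card ((\<lambda>(i, b). if b then u i else p (u i)) ` ({..<g} \<times> (UNIV :: bool set))) = card ({..<g} \<times> (UNIV :: bool set))"
    using card by (simp add: card_cartesian_product)
qed

lemma u_distinct: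
  assumes "i < g" "j < g" "i \<noteq> j"
  shows "u i \<noteq> u j" "u i \<noteq> p (u j)" "p (u i) \<noteq> p (u j)"
proof -
  have I: "\<And>x y. x \<in> {..<g} \<times> (UNIV :: bool set) \<Longrightarrow> y \<in> {..<g} \<times> (UNIV :: bool set) \<Longrightarrow>
     (\<lambda>(i, b). if b then u i else p (u i)) x = (\<lambda>(i, b). if b then u i else p (u i)) y \<Longrightarrow> x = y"
    using inj_F unfolding inj_on_def by blast
  show "u i \<noteq> u j" using I[of "(i, True)" "(j, True)"] assms by auto
  show "u i \<noteq> p (u j)" using I[of "(i, True)" "(j, False)"] assms by auto
  show "p (u i) \<noteq> p (u j)" using I[of "(i, False)" "(j, False)"] assms by auto
qed

lemma u_cover: "\<exists>j<g. x = u j \<or> x = p (u j)"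
proof -
  have "x \<in> fst ` (a ` {..<g} \<union> st ` a ` {..<g})" using cover by simp
  then show ?thesis using fst_st_a by (auto simp: u_def)
qed

lemma u_neq: "u i \<noteq> p (u i)" using p_neq by metis

lemma wedge_entry:
  "wedge (limg (a i)) (limg (st (a i))) $ r $ s =
     (if r = u i \<and> s = p (u i) then tau (u i) else 0) - (if r = p (u i) \<and> s = u i then tau (u i) else 0)"
proof -
  have f1: "fst (a i) = u i" by (simp add: u_def)
  have f2: "fst (st (a i)) = p (u i)" by (rule fst_st_a)
  have l: "lsgn (a i) * lsgn (st (a i)) = tau (u i)" using lsgn_st[of "a i"] f1 by simp
  show ?thesis
    unfolding wedge_def limg_def using f1 f2 l u_neq[of i] by (auto simp: mult.commute)
qed

lemma Q_entry: "Q $ r $ s = (if r \<in> S \<and> s = p r then tau r else 0)"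
proof -
  define I where "I = {i. i < g \<and> adj (fst (st (a i))) (fst (a i))}"
  obtain j where j: "j < g" "r = u j \<or> r = p (u j)" using u_cover by blast
  have "Q $ r $ s = (\<Sum>i\<in>I. wedge (limg (a i)) (limg (st (a i))) $ r $ s)"
    unfolding Qform_def I_def by simp
  also have "\<dots> = (\<Sum>i\<in>I. if i = j then wedge (limg (a j)) (limg (st (a j))) $ r $ s else 0)"
  proof (rule sum.cong)
    fix i assume "i \<in> I"
    then have "i < g" by (simp add: I_def)
    then show "wedge (limg (a i)) (limg (st (a i))) $ r $ s = (if i = j then wedge (limg (a j)) (limg (st (a j))) $ r $ s else 0)"
      using u_distinct[of i j] u_distinct[of j i] j by (cases "i = j") (auto simp: wedge_entry)
  qed simp
  also have "\<dots> = (if j \<in> I then wedge (limg (a j)) (limg (st (a j))) $ r $ s else 0)"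
    by (simp add: I_def)
  also have "\<dots> = (if r \<in> S \<and> s = p r then tau r else 0)"
  proof -
    have jI: "j \<in> I \<longleftrightarrow> r \<in> S" using j fst_st_a[of j]
      by (auto simp: I_def S_def u_def[symmetric] adj_sym)
    show ?thesis using j jI by (auto simp: wedge_entry tau_p u_neq)
  qed
  finally show ?thesis .
qed

lemma suppQ: "suppW Q = S"
  unfolding suppW_def by (auto simp: Q_entry S_p)

lemma stab_form1: "act2 (elem x (p x) c) Q = Q"
  by (simp add: vec_eq_iff act2_elem Q_entry S_p tau_p p_neq p_inj)

lemma stab_form2_A:
  assumes "i \<noteq> j" "p i \<noteq> j" "i \<in> S"
  shows "act2 (elem (p j) (p i) (-(tau i * tau j * c))) Q $ r $ s =
       Q $ r $ s + (if r = p j \<and> s = i then tau j * c else 0)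
        - (if s = p j \<and> r = i then tau j * c else 0)"
proof -
  have q1: "Q $ p i $ s' = (if s' = i then - tau i else 0)" for s' using assms by (simp add: Q_entry S_p tau_p)
  have q2: "Q $ r' $ p i = (if r' = i then tau i else 0)" for r' using assms by (auto simp add: Q_entry p_inj)
  have q3: "Q $ p i $ p i = 0" by (simp add: Q_entry p_neq)
  have e: "- (tau i * tau j * c) * - tau i = tau j * c" "- (tau i * tau j * c) * tau i = - (tau j * c)"
    by (simp_all add: algebra_simps)
  show ?thesis using assms unfolding act2_elem q1 q2 q3
    by (cases "r = p j"; cases "s = i"; cases "s = p j"; cases "r = i") (simp_all add: e p_neq)
qed

lemma stab_form2:
  assumes "i \<noteq> j" "p i \<noteq> j" "i \<in> S" "j \<in> S"
  shows "act2 (elem i j c ** elem (p j) (p i) (-(tau i * tau j * c))) Q = Q"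
proof -
  have "act2 (elem i j c ** elem (p j) (p i) (-(tau i * tau j * c))) Q $ r $ s = Q $ r $ s" for r s
  proof -
    note A = stab_form2_A[OF assms(1-3)]
    have q1: "act2 (elem (p j) (p i) (-(tau i * tau j * c))) Q $ j $ s = (if s = p j then tau j else 0)"
      using assms p_neq[of j] by (simp add: A Q_entry)
    have q2: "act2 (elem (p j) (p i) (-(tau i * tau j * c))) Q $ r $ j = (if r = p j then - tau j else 0)"
      using assms p_neq[of j] by (auto simp add: A Q_entry tau_p p_inj S_p)
    have q3: "act2 (elem (p j) (p i) (-(tau i * tau j * c))) Q $ j $ j = 0"
      using assms p_neq[of j] by (simp add: A Q_entry)
      have ipj: "i \<noteq> p j" using assms(2) by auto
      show ?thesis
      using assms p_neq[of j] ipj unfolding act2_mult act2_elem[of i j c] q1 q2 q3 A[of c r s] by (cases "r = i"; cases "s = i"; cases "r = p j"; cases "s = p j") (simp_all add: algebra_simps)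
  qed
  then show ?thesis by (simp add: vec_eq_iff)
qed

lemma stab_inv: "act2 (Nmat (x, True) ** Nmat (p x, True)) Q = Q"
  by (auto simp: vec_eq_iff act2_mult act2_Nmat Q_entry p_neq p_inj)


lemma fst_st': "fst (st w) = p (fst w)"
  by (metis fst_st prod.collapse)

lemma lsgn_sq [simp]: "lsgn w * lsgn w = 1"
  by (simp add: lsgn_def)

lemma lsgn_st': "lsgn (st w) = tau (fst w) * lsgn w"
proof -
  have "tau (fst w) * lsgn w = lsgn w * lsgn (st w) * lsgn w" by (simp add: lsgn_st)
  also have "\<dots> = lsgn (st w)" by (simp add: algebra_simps)
  finally show ?thesis by simp
qed

abbreviation TT where "TT \<equiv> std_transv adj st Q \<union> Q_inversions st Q"
abbreviation GG where "GG \<equiv> Ggens adj Q"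
abbreviation vd where "vd \<equiv> vdom adj"

lemma TT_cases:
  assumes "t \<in> TT"
  obtains (f1) x where "x \<in> S" "vd x (p x)" "t = elem x (p x) (tau x)"
    | (f2) i j c where "i \<in> S" "j \<in> S" "i \<noteq> j" "p i \<noteq> j" "vd i j" "vd (p j) (p i)" "c = 1 \<or> c = -1"
         "t = elem i j c ** elem (p j) (p i) (-(tau i * tau j * c))"
    | (f3) x where "x \<in> S" "t = Nmat (x, True) ** Nmat (p x, True)"
proof -
  consider (f1) b where "t = Emat b (st b)" "fst b \<in> S" "ldom adj b (st b)"
    | (f2) b d where "t = Emat b d ** matrix_inv (Emat (st d) (st b))" "fst b \<in> S" "fst d \<in> S"
        "fst b \<noteq> fst d" "fst (st b) \<noteq> fst d" "ldom adj b d" "ldom adj (st d) (st b)"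
    | (f3) b where "t = Nmat b ** Nmat (st b)" "fst b \<in> S"
    using assms unfolding std_transv_def Q_inversions_def suppQ by blast
  then show ?thesis
  proof cases
    case f1
    have "t = elem (fst b) (p (fst b)) (tau (fst b))"
      using f1 p_neq[of "fst b"] by (simp add: Emat_elem fst_st' lsgn_st)
    then show ?thesis using f1 that(1)[of "fst b"] by (auto simp: ldom_def fst_st')
  next
    case f2
    define c where "c = lsgn b * lsgn d"
    have c: "c = 1 \<or> c = -1" by (auto simp: c_def lsgn_def)
    have "t = elem (fst b) (fst d) c ** elem (p (fst d)) (p (fst b)) (-(tau (fst b) * tau (fst d) * c))"
      using f2 by (simp add: Emat_elem fst_st' lsgn_st' p_inj matrix_inv_elem c_def algebra_simps)
    then show ?thesis using f2 c that(2)[of "fst b" "fst d" c] by (auto simp: ldom_def fst_st')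
  next
    case f3
    then show ?thesis using that(3)[of "fst b"] by (metis Nmat_fst fst_st')
  qed
qed

lemma TT_form1: "x \<in> S \<Longrightarrow> vd x (p x) \<Longrightarrow> elem x (p x) (tau x) \<in> TT"
proof -
  assume h: "x \<in> S" "vd x (p x)"
  have "Emat (x, True) (st (x, True)) = elem x (p x) (tau x)"
    using p_neq[of x] by (simp add: Emat_elem fst_st' tau_def)
  moreover have "Emat (x, True) (st (x, True)) \<in> std_transv adj st Q"
    unfolding std_transv_def suppQ using h by (auto simp: ldom_def fst_st')
  ultimately show ?thesis by auto
qed

lemma TT_form2:
  assumes "i \<in> S" "j \<in> S" "i \<noteq> j" "p i \<noteq> j" "vd i j" "vd (p j) (p i)" "c = 1 \<or> c = -1"
  shows "elem i j c ** elem (p j) (p i) (-(tau i * tau j * c)) \<in> TT"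
proof -
  define b where "b = (i, c = 1)"
  define d where "d = (j, True)"
  have l: "lsgn b * lsgn d = c" using assms(7) by (auto simp: b_def d_def)
  have "Emat b d ** matrix_inv (Emat (st d) (st b)) = elem i j c ** elem (p j) (p i) (-(tau i * tau j * c))"
    using assms l by (simp add: b_def d_def Emat_elem fst_st' lsgn_st' p_inj matrix_inv_elem algebra_simps)
  moreover have "Emat b d ** matrix_inv (Emat (st d) (st b)) \<in> std_transv adj st Q"
    unfolding std_transv_def suppQ
    apply (rule UnI2, rule CollectI, rule exI[of _ b], rule exI[of _ d])
    using assms by (auto simp: ldom_def fst_st' b_def d_def)
  ultimately show ?thesis by auto
qed

lemma TT_inv: "x \<in> S \<Longrightarrow> Nmat (x, True) ** Nmat (p x, True) \<in> TT"
proof -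
  assume "x \<in> S"
  then have "Nmat (x, True) ** Nmat (st (x, True)) \<in> Q_inversions st Q"
    unfolding Q_inversions_def suppQ by auto
  then show ?thesis by (metis Nmat_fst fst_st' fst_conv UnI2)
qed

lemma GG_elem: "y \<in> S \<Longrightarrow> vd x y \<Longrightarrow> x \<noteq> y \<Longrightarrow> elem x y 1 \<in> GG"
proof -
  assume h: "y \<in> S" "vd x y" "x \<noteq> y"
  have "Emat (x, True) (y, True) = elem x y 1" using h by (simp add: Emat_elem)
  moreover have "Emat (x, True) (y, True) \<in> GG" unfolding Ggens_def suppQ using h by blast
  ultimately show ?thesis by simp
qed

lemma GG_N: "y \<in> S \<Longrightarrow> Nmat (y, True) \<in> GG"
  unfolding Ggens_def suppQ by blast

lemma GG_cases: "s \<in> GG \<Longrightarrow> (\<exists>x y. y \<in> S \<and> vd x y \<and> x \<noteq> y \<and> s = elem x y 1) \<or> (\<exists>y. y \<in> S \<and> s = Nmat (y, True))"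
  unfolding Ggens_def suppQ by (auto simp: Emat_elem) blast

lemma GG_invertible: "s \<in> GG \<Longrightarrow> s ** matrix_inv s = mat 1 \<and> matrix_inv s ** s = mat 1"
  apply (drule GG_cases)
  apply (elim disjE exE conjE)
   apply (simp add: matrix_inv_elem elem_inv)
   apply (metis elem_inv minus_minus)
  apply (simp add: matrix_inv_Nmat Nmat_sq)
  done

lemma mG_inv: "A \<in> mgen GG \<Longrightarrow> A ** matrix_inv A = mat 1 \<and> matrix_inv A ** A = mat 1 \<and> matrix_inv A \<in> mgen GG"
proof -
  assume "A \<in> mgen GG"
  then obtain B where B: "B \<in> mgen GG" "A ** B = mat 1" "B ** A = mat 1"
    using mgen_invex[OF GG_invertible] by blast
  then have "matrix_inv A = B" by (simp add: matrix_inv_eq)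
  then show ?thesis using B by simp
qed

lemma elem_mG: "y \<in> S \<Longrightarrow> vd x y \<Longrightarrow> x \<noteq> y \<Longrightarrow> c = 1 \<or> c = -1 \<Longrightarrow> elem x y c \<in> mgen GG"
proof -
  assume h: "y \<in> S" "vd x y" "x \<noteq> y" "c = 1 \<or> c = -1"
  show ?thesis
  proof (cases "c = 1")
    case True then show ?thesis using mgen_gen[OF GG_elem[OF h(1-3)]] by simp
  next
    case False
    then have "c = -1" using h by simp
    then show ?thesis using mgen_geninv[OF GG_elem[OF h(1-3)]] matrix_inv_elem[OF h(3), of 1] by simp
  qed
qed

lemma TT_mG: "t \<in> TT \<Longrightarrow> t \<in> mgen GG"
proof -
  assume "t \<in> TT"
  then show ?thesis
  proof (cases rule: TT_cases)
    case (f1 x) then show ?thesis using elem_mG[of "p x" x "tau x"] p_neq[of x] tau_pm[of x] by (simp add: S_p)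
  next
    case (f2 i j c)
    have c: "-(tau i * tau j * c) = 1 \<or> -(tau i * tau j * c) = -1"
      using f2(7) tau_pm[of i] tau_pm[of j] by auto
    have "elem i j c \<in> mgen GG" using f2 elem_mG by blast
    moreover have "elem (p j) (p i) (-(tau i * tau j * c)) \<in> mgen GG"
      using f2 c elem_mG[of "p i" "p j"] by (simp add: S_p p_inj)
    ultimately show ?thesis using f2(8) mgen_mult by blast
  next
    case (f3 x) then show ?thesis using mgen_mult[OF mgen_gen[OF GG_N] mgen_gen[OF GG_N]] by (simp add: S_p)
  qed
qed

lemma TT_stab: "t \<in> TT \<Longrightarrow> act2 t Q = Q"
  by (erule TT_cases) (simp_all add: stab_form1 stab_form2 stab_inv)

lemma TT_invertible: "t \<in> TT \<Longrightarrow> t ** matrix_inv t = mat 1 \<and> matrix_inv t ** t = mat 1"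
  using TT_mG mG_inv by blast

lemma act2_inv: "A ** matrix_inv A = mat 1 \<and> matrix_inv A ** A = mat 1 \<Longrightarrow> act2 A Q = Q \<Longrightarrow> act2 (matrix_inv A) Q = Q"
  by (metis act2_mult act2_one)

lemma mTT_sub: "A \<in> mgen TT \<Longrightarrow> A \<in> mgen GG \<and> act2 A Q = Q"
proof (induction A rule: mgen.induct)
  case one then show ?case by (simp add: mgen.one act2_one)
next
  case (mul s g)
  have "s \<in> mgen GG" "act2 s Q = Q" using TT_mG TT_stab mul by blast+
  then show ?case using mul mgen_mult[of s GG g] by (simp add: act2_mult)
next
  case (mulinv s g)
  have "matrix_inv s \<in> mgen GG" using mG_inv TT_mG mulinv by blast
  moreover have "act2 (matrix_inv s) Q = Q" using act2_inv TT_invertible TT_stab mulinv by blast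
  ultimately show ?case using mulinv mgen_mult[of "matrix_inv s" GG g] by (simp add: act2_mult)
qed

lemma vd_refl: "vd x x" by (simp add: vdom_def)

lemma vd_trans: "vd x y \<Longrightarrow> vd y z \<Longrightarrow> vd x z"
  unfolding vdom_def by (metis adj_sym)

lemma elem_sup:
  assumes IH: "\<forall>r s. r \<noteq> s \<and> W $ r $ s \<noteq> 0 \<longrightarrow> s \<in> S \<and> vd r s" "\<forall>s. s \<notin> S \<longrightarrow> W $ s $ s = 1"
    and h: "y \<in> S" "vd x y" "x \<noteq> y"
  shows "(\<forall>r s. r \<noteq> s \<and> (elem x y c ** W) $ r $ s \<noteq> 0 \<longrightarrow> s \<in> S \<and> vd r s) \<and> (\<forall>s. s \<notin> S \<longrightarrow> (elem x y c ** W) $ s $ s = 1)"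
proof (rule conjI; intro allI impI)
  fix r s assume rs: "r \<noteq> s \<and> (elem x y c ** W) $ r $ s \<noteq> 0"
  then have "W $ r $ s \<noteq> 0 \<or> (r = x \<and> W $ y $ s \<noteq> 0)" by (auto simp: elem_mult split: if_splits)
  then show "s \<in> S \<and> vd r s"
  proof
    assume "W $ r $ s \<noteq> 0" then show ?thesis using IH rs by auto
  next
    assume a: "r = x \<and> W $ y $ s \<noteq> 0"
    show ?thesis
    proof (cases "y = s")
      case True then show ?thesis using a h by auto
    next
      case False then show ?thesis using a h IH vd_trans by blast
    qed
  qed
next
  fix s assume s: "s \<notin> S"
  have "y \<noteq> s" using s h by auto
  then have "W $ y $ s = 0" using IH s by auto
  then show "(elem x y c ** W) $ s $ s = 1" using IH s by (auto simp add: elem_mult)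
qed

lemma Nmat_sup:
  assumes IH: "\<forall>r s. r \<noteq> s \<and> W $ r $ s \<noteq> 0 \<longrightarrow> s \<in> S \<and> vd r s" "\<forall>s. s \<notin> S \<longrightarrow> W $ s $ s = 1"
    and h: "y \<in> S"
  shows "(\<forall>r s. r \<noteq> s \<and> (Nmat (y, True) ** W) $ r $ s \<noteq> 0 \<longrightarrow> s \<in> S \<and> vd r s) \<and> (\<forall>s. s \<notin> S \<longrightarrow> (Nmat (y, True) ** W) $ s $ s = 1)"
  using IH h by (auto simp: Nmat_mult)

lemma sup_a:
  "A \<in> mgen GG \<Longrightarrow> (\<forall>r s. r \<noteq> s \<and> A $ r $ s \<noteq> 0 \<longrightarrow> s \<in> S \<and> vd r s) \<and> (\<forall>s. s \<notin> S \<longrightarrow> A $ s $ s = 1)"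
proof (induction A rule: mgen.induct)
  case one then show ?case by (simp add: mat1_entry)
next
  case (mul s g)
  have "(\<exists>x y. y \<in> S \<and> vd x y \<and> x \<noteq> y \<and> s = elem x y 1) \<or> (\<exists>y. y \<in> S \<and> s = Nmat (y, True))"
    using GG_cases mul(1) by blast
  then show ?case
  proof (elim disjE exE conjE)
    fix x y assume h: "y \<in> S" "vd x y" "x \<noteq> y" "s = elem x y 1"
    show ?case using elem_sup[OF mul(3)[THEN conjunct1] mul(3)[THEN conjunct2] h(1-3), of 1] h(4) by simp
  next
    fix y assume h: "y \<in> S" "s = Nmat (y, True)"
    show ?case using Nmat_sup[OF mul(3)[THEN conjunct1] mul(3)[THEN conjunct2] h(1)] h(2) by simp
  qed
next
  case (mulinv s g)
  have "(\<exists>x y. y \<in> S \<and> vd x y \<and> x \<noteq> y \<and> s = elem x y 1) \<or> (\<exists>y. y \<in> S \<and> s = Nmat (y, True))"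
    using GG_cases mulinv(1) by blast
  then show ?case
  proof (elim disjE exE conjE)
    fix x y assume h: "y \<in> S" "vd x y" "x \<noteq> y" "s = elem x y 1"
    show ?case using elem_sup[OF mulinv(3)[THEN conjunct1] mulinv(3)[THEN conjunct2] h(1-3), of "-1"] h(4) h(3)
      by (simp add: matrix_inv_elem)
  next
    fix y assume h: "y \<in> S" "s = Nmat (y, True)"
    show ?case using Nmat_sup[OF mulinv(3)[THEN conjunct1] mulinv(3)[THEN conjunct2] h(1)] h(2) by (simp add: matrix_inv_Nmat)
  qed
qed

lemma MQ_rel:
  assumes hM: "M \<in> mgen GG" "act2 M Q = Q"
  shows "M ** Q = Q ** transpose (matrix_inv M)"
proof -
  have inv: "matrix_inv M ** M = mat 1" using mG_inv[OF hM(1)] by simp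
  have "(M ** Q ** transpose M) ** transpose (matrix_inv M) = (M ** Q) ** (transpose M ** transpose (matrix_inv M))"
    by (simp add: matrix_mul_assoc)
  also have "transpose M ** transpose (matrix_inv M) = mat 1"
    by (simp add: matrix_transpose_mul[symmetric] inv transpose_mat)
  finally have "M ** Q = (M ** Q ** transpose M) ** transpose (matrix_inv M)"
    by (simp add: matrix_mul_rid)
  also have "\<dots> = Q ** transpose (matrix_inv M)" using hM(2) by (simp add: act2_def)
  finally show ?thesis .
qed

lemma rel:
  assumes hM: "M \<in> mgen GG" "act2 M Q = Q" and s: "s \<in> S"
  shows "M $ r $ s * tau s = (if r \<in> S then tau r * matrix_inv M $ (p s) $ (p r) else 0)"
proof -
  have "(M ** Q) $ r $ (p s) = (\<Sum>k\<in>UNIV. M $ r $ k * (if s = k then tau s else 0))"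
    unfolding matrix_matrix_mult_def using s by (auto simp: Q_entry p_inj intro!: sum.cong)
  also have "\<dots> = M $ r $ s * tau s" by (simp add: sum_mult_if)
  finally have 1: "(M ** Q) $ r $ (p s) = M $ r $ s * tau s" .
  have "(Q ** transpose (matrix_inv M)) $ r $ (p s) = (\<Sum>k\<in>UNIV. (if p r = k then (if r \<in> S then tau r else 0) else 0) * matrix_inv M $ (p s) $ k)"
    unfolding matrix_matrix_mult_def transpose_def by (auto simp: Q_entry intro!: sum.cong)
  also have "\<dots> = (if r \<in> S then tau r * matrix_inv M $ (p s) $ (p r) else 0)" by (simp add: sum_if_mult)
  finally have 2: "(Q ** transpose (matrix_inv M)) $ r $ (p s) = (if r \<in> S then tau r * matrix_inv M $ (p s) $ (p r) else 0)" .
  show ?thesis using 1 2 MQ_rel[OF hM] by simp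
qed

definition RR where "RR x y \<longleftrightarrow> vd x y \<and> vd (p y) (p x)"

lemma RR_refl: "RR x x" by (simp add: RR_def vd_refl)
lemma RR_trans: "RR x y \<Longrightarrow> RR y z \<Longrightarrow> RR x z" unfolding RR_def using vd_trans by blast

lemma supp_off:
  assumes hM: "M \<in> mgen GG" "act2 M Q = Q" and rs: "r \<noteq> s" "M $ r $ s \<noteq> 0"
  shows "r \<in> S \<and> s \<in> S \<and> RR r s"
proof -
  have s: "s \<in> S" "vd r s" using sup_a[OF hM(1)] rs by auto
  have "M $ r $ s * tau s \<noteq> 0" using rs by simp
  then have r: "r \<in> S" "matrix_inv M $ (p s) $ (p r) \<noteq> 0" using rel[OF hM s(1), of r] by (auto split: if_splits)
  have "matrix_inv M \<in> mgen GG" using mG_inv hM(1) by blast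
  then have "vd (p s) (p r)" using sup_a r(2) rs(1) by (auto simp: p_inj)
  then show ?thesis using r s by (simp add: RR_def)
qed

lemma supp_out:
  assumes hM: "M \<in> mgen GG" and s: "s \<notin> S"
  shows "M $ r $ s = (if r = s then 1 else 0)"
  using sup_a[OF hM] s by auto

lemma col_inv:
  fixes N M :: "int^'v^'v"
  assumes "N ** M = mat 1" and col: "\<And>k. M $ k $ x = (if k = x then 1 else 0)"
  shows "N $ k $ x = (if k = x then 1 else 0)"
proof -
  have "(N ** M) $ k $ x = (\<Sum>l\<in>UNIV. N $ k $ l * (if x = l then 1 else 0))"
    unfolding matrix_matrix_mult_def using col by (auto intro!: sum.cong)
  also have "\<dots> = N $ k $ x" by (simp add: sum_mult_if)
  finally show ?thesis using assms(1) by (simp add: mat1_entry)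
qed

lemma zero_out:
  assumes hM: "M \<in> mgen GG" "act2 M Q = Q" and Rm: "Rm \<subseteq> S" "\<And>x. x \<in> Rm \<Longrightarrow> p x \<in> Rm"
    and cols: "\<And>x k. x \<notin> Rm \<Longrightarrow> M $ k $ x = (if k = x then 1 else 0)"
    and sr: "s \<in> Rm" "r \<notin> Rm"
  shows "M $ r $ s = 0"
proof -
  have sS: "s \<in> S" using Rm sr by auto
  show ?thesis
  proof (cases "r \<in> S")
    case False then show ?thesis using rel[OF hM sS, of r] by simp
  next
    case True
    have "p r \<notin> Rm" using Rm(2)[of "p r"] sr by auto
    then have "matrix_inv M $ (p s) $ (p r) = (if p s = p r then 1 else 0)"
      using col_inv[of "matrix_inv M" M "p r"] mG_inv[OF hM(1)] cols by blast
    then have "matrix_inv M $ (p s) $ (p r) = 0" using sr by (auto simp: p_inj)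
    then show ?thesis using rel[OF hM sS, of r] True by simp
  qed
qed

lemma diag_pv:
  assumes hM: "M \<in> mgen GG" "act2 M Q = Q" and v: "v \<in> S"
    and col: "\<And>k. M $ k $ v = (if k = v then 1 else 0)"
  shows "M $ (p v) $ (p v) = 1"
proof -
  have "matrix_inv M $ v $ v = 1"
    using col_inv[of "matrix_inv M" M v] mG_inv[OF hM(1)] col by auto
  then show ?thesis using rel[OF hM, of "p v" "p v"] v by (simp add: S_p)
qed

definition LL where "LL M \<longleftrightarrow> M \<in> mgen GG \<and> act2 M Q = Q"
definition cond where "cond Rm M \<longleftrightarrow> LL M \<and> (\<forall>x k. x \<notin> Rm \<longrightarrow> M $ k $ x = (if k = x then 1 else 0))"

lemma reduce:
  assumes W: "W \<in> mgen TT" and M: "LL M"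
  shows "LL (W ** M)" "W ** M \<in> mgen TT \<Longrightarrow> M \<in> mgen TT"
proof -
  have "W \<in> mgen GG \<and> act2 W Q = Q" using mTT_sub W by blast
  then show "LL (W ** M)" using M mgen_mult[of W GG M] unfolding LL_def by (simp add: act2_mult)
  show "W ** M \<in> mgen TT \<Longrightarrow> M \<in> mgen TT" using mgen_cancel[OF TT_invertible W] by blast
qed

lemma op1: "x \<in> S \<Longrightarrow> vd x (p x) \<Longrightarrow> c = 1 \<or> c = -1 \<Longrightarrow> elem x (p x) c \<in> mgen TT"
proof -
  assume h: "x \<in> S" "vd x (p x)" "c = 1 \<or> c = -1"
  show ?thesis
  proof (cases "c = tau x")
    case True then show ?thesis using mgen_gen[OF TT_form1[OF h(1,2)]] by simp
  next
    case False
    then have "c = - tau x" using h(3) tau_pm[of x] by auto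
    then show ?thesis using mgen_geninv[OF TT_form1[OF h(1,2)]] matrix_inv_elem[of x "p x" "tau x"] p_neq[of x]
      by auto
  qed
qed

lemma op2:
  assumes "i \<in> S" "j \<in> S" "i \<noteq> j" "p i \<noteq> j" "RR i j" "c = 1 \<or> c = -1"
  shows "elem i j c ** elem (p j) (p i) (-(tau i * tau j * c)) \<in> mgen TT"
  using assms by (intro mgen_gen TT_form2) (auto simp: RR_def)

lemma op3: "x \<in> S \<Longrightarrow> Nmat (x, True) ** Nmat (p x, True) \<in> mgen TT"
  by (intro mgen_gen TT_inv)

lemma col_mult:
  fixes t M :: "int^'v^'v"
  assumes "\<forall>k. M $ k $ x = (if k = x then 1 else 0)"
  shows "(t ** M) $ k $ x = t $ k $ x"
proof -
  have "(t ** M) $ k $ x = (\<Sum>l\<in>UNIV. t $ k $ l * (if x = l then 1 else 0))"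
    unfolding matrix_matrix_mult_def using assms by (auto intro!: sum.cong)
  then show ?thesis by (simp add: sum_mult_if)
qed

lemma elem_col: "x \<noteq> j \<Longrightarrow> elem i j c $ k $ x = (if k = x then 1 else 0)"
  by (simp add: elem_entry)

lemma Nmat_col: "x \<noteq> fst b \<Longrightarrow> Nmat b $ k $ x = (if k = x then 1 else 0)"
  by (simp add: Nmat_entry)

lemma cond_step:
  assumes "cond Rm M" "W \<in> mgen TT" "\<And>x k. x \<notin> Rm \<Longrightarrow> W $ k $ x = (if k = x then 1 else 0)"
  shows "cond Rm (W ** M)"
  using assms reduce(1)[OF assms(2)] col_mult unfolding cond_def by metis

lemma prod_col:
  fixes A B :: "int^'v^'v"
  assumes "\<forall>k. A $ k $ x = (if k = x then 1 else 0)" "\<forall>k. B $ k $ x = (if k = x then 1 else 0)"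
  shows "(A ** B) $ k $ x = (if k = x then 1 else 0)"
  using col_mult[OF assms(2)] assms(1) by simp

lemma elem2_mult:
  fixes M :: "int^'v^'v"
  shows "(elem i j c ** elem k l d ** M) $ r $ s = (M $ r $ s + (if r = k then d * M $ l $ s else 0))
     + (if r = i then c * (M $ j $ s + (if j = k then d * M $ l $ s else 0)) else 0)"
  by (simp add: matrix_mul_assoc[symmetric] elem_mult)

lemma sum_decr:
  fixes f h :: "'a \<Rightarrow> nat"
  assumes "finite A" "i \<in> A" "h i < f i" "\<And>j. j \<in> A \<Longrightarrow> j \<noteq> i \<Longrightarrow> h j = f j"
  shows "sum h A < sum f A"
proof -
  have "sum h A = h i + sum h (A - {i})" using assms by (simp add: sum.remove)
  also have "sum h (A - {i}) = sum f (A - {i})" using assms by (intro sum.cong) auto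
  also have "h i + sum f (A - {i}) < f i + sum f (A - {i})" using assms by simp
  also have "\<dots> = sum f A" using assms by (simp add: sum.remove)
  finally show ?thesis .
qed

lemma euclid_step:
  fixes x y :: int
  assumes "y \<noteq> 0" "\<bar>y\<bar> \<le> \<bar>x\<bar>"
  obtains c where "c = 1 \<or> c = -1" "\<bar>x + c * y\<bar> < \<bar>x\<bar>"
proof (cases "(0 < x) = (0 < y)")
  case True then show ?thesis using assms by (intro that[of "-1"]) auto
next
  case False then show ?thesis using assms by (intro that[of 1]) auto
qed

lemma exists_max:
  assumes "finite Rm" "Rm \<noteq> {}"
  obtains v where "v \<in> Rm" "\<And>i. i \<in> Rm \<Longrightarrow> RR i v \<Longrightarrow> RR v i"
proof -
  define f where "f v = card {j \<in> Rm. RR j v}" for v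
  define m where "m = Min (f ` Rm)"
  have "m \<in> f ` Rm" unfolding m_def using assms by simp
  then obtain v where v: "v \<in> Rm" "f v = m" by auto
  have min: "f v \<le> f i" if "i \<in> Rm" for i using v that assms unfolding m_def by simp
  show ?thesis
  proof (rule that[OF v(1)])
    fix i assume i: "i \<in> Rm" "RR i v"
    have sub: "{j \<in> Rm. RR j i} \<subseteq> {j \<in> Rm. RR j v}" using i RR_trans by blast
    have "card {j \<in> Rm. RR j v} \<le> card {j \<in> Rm. RR j i}" using min[OF i(1)] by (simp add: f_def)
    moreover have "card {j \<in> Rm. RR j i} \<le> card {j \<in> Rm. RR j v}" using sub assms(1) by (intro card_mono) auto
    ultimately have "{j \<in> Rm. RR j i} = {j \<in> Rm. RR j v}" using sub assms(1) by (intro card_subset_eq) auto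
    then show "RR v i" using v(1) RR_refl by blast
  qed
qed

lemma cond_LL: "cond Rm M \<Longrightarrow> M \<in> mgen GG" "cond Rm M \<Longrightarrow> act2 M Q = Q"
  by (auto simp: cond_def LL_def)

context
  fixes Rm :: "'v set" and v :: 'v
  assumes RmS: "Rm \<subseteq> S" and Rmp: "\<And>x. x \<in> Rm \<Longrightarrow> p x \<in> Rm" and vR: "v \<in> Rm"
    and vmax: "\<And>i. i \<in> Rm \<Longrightarrow> RR i v \<Longrightarrow> RR v i"
    and IH: "\<And>M. cond (Rm - {v, p v}) M \<Longrightarrow> M \<in> mgen TT"
begin

lemma vS: "v \<in> S" "p v \<in> Rm" "p v \<in> S" "p v \<noteq> v" "v \<noteq> p v"
  using RmS vR Rmp p_neq[of v] by auto

lemma phaseC2: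
  "cond Rm M \<Longrightarrow> (\<forall>k. M $ k $ v = (if k = v then 1 else 0)) \<Longrightarrow> (\<forall>i\<in>Rm - {v, p v}. M $ i $ p v = 0) \<Longrightarrow> M \<in> mgen TT"
proof (induction "nat \<bar>M $ v $ p v\<bar>" arbitrary: M rule: less_induct)
  case less
  have hM: "M \<in> mgen GG" "act2 M Q = Q" using cond_LL less.prems(1) by auto
  have M1: "M $ p v $ p v = 1" using diag_pv[OF hM vS(1)] less.prems(2) by blast
  show ?case
  proof (cases "M $ v $ p v = 0")
    case True
    have "cond (Rm - {v, p v}) M"
      unfolding cond_def
    proof (intro conjI allI impI)
      show "LL M" using less.prems(1) by (simp add: cond_def)
      fix x k assume x: "x \<notin> Rm - {v, p v}"
      show "M $ k $ x = (if k = x then 1 else 0)"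
      proof (cases "x \<in> Rm")
        case False then show ?thesis using less.prems(1) by (simp add: cond_def)
      next
        case xR: True
        then have "x = v \<or> x = p v" using x by auto
        then show ?thesis
        proof
          assume "x = v" then show ?thesis using less.prems(2) by simp
        next
          assume xp: "x = p v"
          show ?thesis
          proof (cases "k \<in> Rm")
            case True then show ?thesis using xp less.prems(3) \<open>M $ v $ p v = 0\<close> M1 by auto
          next
            case False
            have cols: "\<And>x k. x \<notin> Rm \<Longrightarrow> M $ k $ x = (if k = x then 1 else 0)"
              using less.prems(1) by (simp add: cond_def)
            show ?thesis using xp zero_out[OF hM RmS Rmp cols vS(2) False] False vS by auto
          qed
        qed
      qed
    qed
    then show ?thesis by (rule IH)
  next
    case False
    have "RR v (p v)" using supp_off[OF hM vS(5) False] by simp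
    then have vd: "vd v (p v)" by (simp add: RR_def)
    obtain c where c: "c = 1 \<or> c = -1" "\<bar>M $ v $ p v + c * 1\<bar> < \<bar>M $ v $ p v\<bar>"
    proof (rule euclid_step[of 1 "M $ v $ p v"])
      show "\<bar>1::int\<bar> \<le> \<bar>M $ v $ p v\<bar>" using False by simp
    qed auto
    let ?t = "elem v (p v) c"
    have t: "?t \<in> mgen TT" using op1[OF vS(1) vd c(1)] .
    have e: "(?t ** M) $ r $ s = M $ r $ s + (if r = v then c * M $ p v $ s else 0)" for r s
      by (simp add: elem_mult)
    have cond': "cond Rm (?t ** M)"
      using cond_step[OF less.prems(1) t] elem_col vS(2) by metis
    have col': "\<forall>k. (?t ** M) $ k $ v = (if k = v then 1 else 0)" using less.prems(2) vS by (simp add: e)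
    have z': "\<forall>i\<in>Rm - {v, p v}. (?t ** M) $ i $ p v = 0" using less.prems(3) by (simp add: e)
    have lt: "nat \<bar>(?t ** M) $ v $ p v\<bar> < nat \<bar>M $ v $ p v\<bar>" using c(2) M1 by (simp add: e)
    have "?t ** M \<in> mgen TT" using less.hyps[OF lt cond' col' z'] .
    then show ?thesis using reduce(2)[OF t] less.prems(1) by (simp add: cond_def)
  qed
qed

lemma phaseC1:
  "cond Rm M \<Longrightarrow> (\<forall>k. M $ k $ v = (if k = v then 1 else 0)) \<Longrightarrow> M \<in> mgen TT"
proof (induction "\<Sum>i\<in>Rm - {v, p v}. nat \<bar>M $ i $ p v\<bar>" arbitrary: M rule: less_induct)
  case less
  have hM: "M \<in> mgen GG" "act2 M Q = Q" using cond_LL less.prems(1) by auto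
  have M1: "M $ p v $ p v = 1" using diag_pv[OF hM vS(1)] less.prems(2) by blast
  show ?case
  proof (cases "\<forall>i\<in>Rm - {v, p v}. M $ i $ p v = 0")
    case True then show ?thesis using phaseC2 less.prems by blast
  next
    case False
    then obtain i where i: "i \<in> Rm" "i \<noteq> v" "i \<noteq> p v" "M $ i $ p v \<noteq> 0" by auto
    have iS: "i \<in> S" "p i \<in> Rm" using RmS Rmp i by auto
    have RRi: "RR i (p v)" using supp_off[OF hM i(3) i(4)] by simp
    have piv: "p i \<noteq> p v" "p i \<noteq> v" using i by (auto simp: p_inj)
    obtain c where c: "c = 1 \<or> c = -1" "\<bar>M $ i $ p v + c * 1\<bar> < \<bar>M $ i $ p v\<bar>"
    proof (rule euclid_step[of 1 "M $ i $ p v"])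
      show "\<bar>1::int\<bar> \<le> \<bar>M $ i $ p v\<bar>" using i(4) by simp
    qed auto
    define d where "d = -(tau i * tau (p v) * c)"
    define t where "t = elem i (p v) c ** elem v (p i) d"
    have t: "t \<in> mgen TT" using op2[OF iS(1) vS(3) i(3) piv(1) RRi c(1)] by (simp add: t_def d_def)
    have e: "(t ** M) $ r $ s = (M $ r $ s + (if r = v then d * M $ p i $ s else 0))
       + (if r = i then c * (M $ p v $ s + (if p v = v then d * M $ p i $ s else 0)) else 0)" for r s
      unfolding t_def by (rule elem2_mult)
    have tcol: "t $ k $ x = (if k = x then 1 else 0)" if "x \<notin> Rm" for x k
      unfolding t_def using that vS(2) iS(2)
      by (intro prod_col allI elem_col) auto
    have cond': "cond Rm (t ** M)" using cond_step[OF less.prems(1) t tcol] by blast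
    have Mpi: "M $ p i $ v = 0" "M $ p v $ v = 0" using less.prems(2) piv vS by auto
    have col': "\<forall>k. (t ** M) $ k $ v = (if k = v then 1 else 0)" using less.prems(2) vS Mpi i by (simp add: e)
    have lt: "(\<Sum>j\<in>Rm - {v, p v}. nat \<bar>(t ** M) $ j $ p v\<bar>) < (\<Sum>j\<in>Rm - {v, p v}. nat \<bar>M $ j $ p v\<bar>)"
    proof (rule sum_decr[of _ i])
      show "nat \<bar>(t ** M) $ i $ p v\<bar> < nat \<bar>M $ i $ p v\<bar>" using c(2) M1 i vS by (simp add: e)
    qed (use i vS in \<open>auto simp: e\<close>)
    have "t ** M \<in> mgen TT" using less.hyps[OF lt cond' col'] .
    then show ?thesis using reduce(2)[OF t] less.prems(1) by (simp add: cond_def)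
  qed
qed

lemma phaseB:
  assumes "cond Rm M" "\<forall>k. k \<noteq> v \<longrightarrow> M $ k $ v = 0"
  shows "M \<in> mgen TT"
proof -
  have hM: "M \<in> mgen GG" "act2 M Q = Q" using cond_LL assms(1) by auto
  have Mv: "M $ l $ v = (if v = l then M $ v $ v else 0)" for l using assms(2) by auto
  have "(matrix_inv M ** M) $ v $ v = (\<Sum>l\<in>UNIV. matrix_inv M $ v $ l * (if v = l then M $ v $ v else 0))"
    unfolding matrix_matrix_mult_def using Mv by simp
  also have "\<dots> = matrix_inv M $ v $ v * M $ v $ v" by (simp add: sum_mult_if)
  finally have "matrix_inv M $ v $ v * M $ v $ v = 1" using mG_inv[OF hM(1)] by (simp add: mat1_entry)
  then have d: "M $ v $ v = 1 \<or> M $ v $ v = -1" by (auto simp: zmult_eq_1_iff)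
  show ?thesis
  proof (cases "M $ v $ v = 1")
    case True
    then show ?thesis using phaseC1[OF assms(1)] assms(2) by auto
  next
    case False
    then have dm: "M $ v $ v = -1" using d by simp
    define t where "t = Nmat (v, True) ** Nmat (p v, True)"
    have t: "t \<in> mgen TT" unfolding t_def using op3[OF vS(1)] .
    have e: "(t ** M) $ r $ s = (if r = v then - (if r = p v then - M $ r $ s else M $ r $ s)
        else (if r = p v then - M $ r $ s else M $ r $ s))" for r s
      unfolding t_def by (simp add: matrix_mul_assoc[symmetric] Nmat_mult)
    have tcol: "t $ k $ x = (if k = x then 1 else 0)" if "x \<notin> Rm" for x k
      unfolding t_def using that vS(2) vR
      by (intro prod_col allI Nmat_col) auto
    have cond': "cond Rm (t ** M)" using cond_step[OF assms(1) t tcol] by blast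
    have col': "\<forall>k. (t ** M) $ k $ v = (if k = v then 1 else 0)" using assms(2) dm vS by (simp add: e)
    have "t ** M \<in> mgen TT" using phaseC1[OF cond' col'] .
    then show ?thesis using reduce(2)[OF t] assms(1) by (simp add: cond_def)
  qed
qed

lemma phaseB':
  assumes "cond Rm M" "w \<in> Rm" "w \<noteq> v" "M $ w $ v \<noteq> 0" "\<forall>k. k \<noteq> w \<longrightarrow> M $ k $ v = 0"
  shows "M \<in> mgen TT"
proof -
  have hM: "M \<in> mgen GG" "act2 M Q = Q" using cond_LL assms(1) by auto
  have wS: "w \<in> S" "p w \<in> Rm" using assms RmS Rmp by auto
  have RRwv: "RR w v" using supp_off[OF hM assms(3,4)] by simp
  have RRvw: "RR v w" using vmax[OF assms(2) RRwv] .
  have Mz: "M $ v $ v = 0" using assms(3,5) by auto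
  show ?thesis
  proof (cases "w = p v")
    case True
    have vd1: "vd v (p v)" "vd (p v) v" using RRwv RRvw True by (auto simp: RR_def)
    define t where "t = elem (p v) v (-1) ** elem v (p v) 1"
    have t: "t \<in> mgen TT" unfolding t_def
      using mgen_mult[OF op1[OF vS(3), of "-1"] op1[OF vS(1) vd1(1), of 1]] vd1(2) by simp
    have e: "(t ** M) $ r $ s = (M $ r $ s + (if r = v then 1 * M $ p v $ s else 0))
       + (if r = p v then (-1) * (M $ v $ s + (if v = v then 1 * M $ p v $ s else 0)) else 0)" for r s
      unfolding t_def by (rule elem2_mult)
    have tcol: "t $ k $ x = (if k = x then 1 else 0)" if "x \<notin> Rm" for x k
      unfolding t_def using that vS(2) vR by (intro prod_col allI elem_col) auto
    have cond': "cond Rm (t ** M)" using cond_step[OF assms(1) t tcol] by blast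
    have col': "\<forall>k. k \<noteq> v \<longrightarrow> (t ** M) $ k $ v = 0" using assms(5) True Mz vS by (auto simp: e)
    have "t ** M \<in> mgen TT" using phaseB[OF cond' col'] .
    then show ?thesis using reduce(2)[OF t] assms(1) by (simp add: cond_def)
  next
    case False
    have pw: "p w \<noteq> v" "p w \<noteq> w" "p v \<noteq> w" using False p_neq[of w] by auto
    define d1 where "d1 = -(tau v * tau w * 1)"
    define t1 where "t1 = elem v w 1 ** elem (p w) (p v) d1"
    have t1: "t1 \<in> mgen TT" unfolding t1_def d1_def
      using op2[OF vS(1) wS(1) assms(3)[symmetric] pw(3) RRvw, of 1] by simp
    have e1: "(t1 ** M) $ r $ s = (M $ r $ s + (if r = p w then d1 * M $ p v $ s else 0))
       + (if r = v then 1 * (M $ w $ s + (if w = p w then d1 * M $ p v $ s else 0)) else 0)" for r s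
      unfolding t1_def by (rule elem2_mult)
    have tcol1: "t1 $ k $ x = (if k = x then 1 else 0)" if "x \<notin> Rm" for x k
      unfolding t1_def using that vS(2) assms(2) by (intro prod_col allI elem_col) auto
    have cond1: "cond Rm (t1 ** M)" using cond_step[OF assms(1) t1 tcol1] by blast
    have c1: "(t1 ** M) $ r $ v = (if r = v then M $ w $ v else if r = w then M $ w $ v else 0)" for r
      using assms(5) pw Mz by (auto simp: e1)
    define d2 where "d2 = -(tau w * tau v * -1)"
    define t2 where "t2 = elem w v (-1) ** elem (p v) (p w) d2"
    have t2: "t2 \<in> mgen TT" unfolding t2_def d2_def
      using op2[OF wS(1) vS(1) assms(3) pw(1) RRwv, of "-1"] by simp
    have e2: "(t2 ** (t1 ** M)) $ r $ s = ((t1 ** M) $ r $ s + (if r = p v then d2 * (t1 ** M) $ p w $ s else 0))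
       + (if r = w then (-1) * ((t1 ** M) $ v $ s + (if v = p v then d2 * (t1 ** M) $ p w $ s else 0)) else 0)" for r s
      unfolding t2_def by (rule elem2_mult)
    have tcol2: "t2 $ k $ x = (if k = x then 1 else 0)" if "x \<notin> Rm" for x k
      unfolding t2_def using that wS(2) vR by (intro prod_col allI elem_col) auto
    have cond2: "cond Rm (t2 ** (t1 ** M))" using cond_step[OF cond1 t2 tcol2] by blast
    have col2: "\<forall>k. k \<noteq> v \<longrightarrow> (t2 ** (t1 ** M)) $ k $ v = 0"
      using pw vS assms(3) by (auto simp: e2 c1)
    have "t2 ** (t1 ** M) \<in> mgen TT" using phaseB[OF cond2 col2] .
    then have "t1 ** M \<in> mgen TT" using reduce(2)[OF t2] cond1 by (simp add: cond_def)
    then show ?thesis using reduce(2)[OF t1] assms(1) by (simp add: cond_def)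
  qed
qed

lemma phaseA:
  "cond Rm M \<Longrightarrow> M \<in> mgen TT"
proof (induction "\<Sum>i\<in>Rm. nat \<bar>M $ i $ v\<bar>" arbitrary: M rule: less_induct)
  case less
  have hM: "M \<in> mgen GG" "act2 M Q = Q" using cond_LL less.prems(1) by auto
  have cols: "\<And>x k. x \<notin> Rm \<Longrightarrow> M $ k $ x = (if k = x then 1 else 0)"
    using less.prems(1) by (simp add: cond_def)
  have zo: "M $ r $ v = 0" if "r \<notin> Rm" for r using zero_out[OF hM RmS Rmp cols vR that] .
  have RRnz: "RR i v \<and> RR v i" if "i \<in> Rm" "M $ i $ v \<noteq> 0" for i
  proof (cases "i = v")
    case True then show ?thesis by (simp add: RR_refl)
  next
    case False
    then have "RR i v" using supp_off[OF hM False that(2)] by simp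
    then show ?thesis using vmax that(1) by blast
  qed
  have fin: "finite Rm" by simp
  show ?case
  proof (cases "\<exists>u\<in>Rm. M $ u $ v \<noteq> 0 \<and> M $ p u $ v \<noteq> 0")
    case True
    then obtain u0 where u0: "u0 \<in> Rm" "M $ u0 $ v \<noteq> 0" "M $ p u0 $ v \<noteq> 0" by auto
    obtain u where u: "u \<in> Rm" "M $ u $ v \<noteq> 0" "M $ p u $ v \<noteq> 0" "\<bar>M $ p u $ v\<bar> \<le> \<bar>M $ u $ v\<bar>"
    proof (cases "\<bar>M $ p u0 $ v\<bar> \<le> \<bar>M $ u0 $ v\<bar>")
      case True then show ?thesis using that u0 by blast
    next
      case False then show ?thesis using that[of "p u0"] u0 Rmp by auto
    qed
    have uS: "u \<in> S" "p u \<in> Rm" using u RmS Rmp by auto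
    have "RR u (p u)" using RRnz[OF u(1,2)] RRnz[OF uS(2) u(3)] RR_trans by blast
    then have vd: "vd u (p u)" by (simp add: RR_def)
    obtain c where c: "c = 1 \<or> c = -1" "\<bar>M $ u $ v + c * M $ p u $ v\<bar> < \<bar>M $ u $ v\<bar>"
      using euclid_step[OF u(3,4)] by blast
    let ?t = "elem u (p u) c"
    have t: "?t \<in> mgen TT" using op1[OF uS(1) vd c(1)] .
    have e: "(?t ** M) $ r $ s = M $ r $ s + (if r = u then c * M $ p u $ s else 0)" for r s
      by (simp add: elem_mult)
    have cond': "cond Rm (?t ** M)"
      using cond_step[OF less.prems(1) t] elem_col uS(2) by metis
    have lt: "(\<Sum>j\<in>Rm. nat \<bar>(?t ** M) $ j $ v\<bar>) < (\<Sum>j\<in>Rm. nat \<bar>M $ j $ v\<bar>)"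
    proof (rule sum_decr[OF fin u(1)])
      show "nat \<bar>(?t ** M) $ u $ v\<bar> < nat \<bar>M $ u $ v\<bar>" using c(2) by (simp add: e)
    qed (simp add: e)
    have "?t ** M \<in> mgen TT" using less.hyps[OF lt cond'] .
    then show ?thesis using reduce(2)[OF t] less.prems(1) by (simp add: cond_def)
  next
    case nopair: False
    show ?thesis
    proof (cases "\<exists>i\<in>Rm. \<exists>j\<in>Rm. i \<noteq> j \<and> M $ i $ v \<noteq> 0 \<and> M $ j $ v \<noteq> 0")
      case True
      then obtain i0 j0 where ij0: "i0 \<in> Rm" "j0 \<in> Rm" "i0 \<noteq> j0" "M $ i0 $ v \<noteq> 0" "M $ j0 $ v \<noteq> 0" by auto
      obtain i j where ij: "i \<in> Rm" "j \<in> Rm" "i \<noteq> j" "M $ i $ v \<noteq> 0" "M $ j $ v \<noteq> 0"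
          "\<bar>M $ j $ v\<bar> \<le> \<bar>M $ i $ v\<bar>"
      proof (cases "\<bar>M $ j0 $ v\<bar> \<le> \<bar>M $ i0 $ v\<bar>")
        case True then show ?thesis using that ij0 by blast
      next
        case False then show ?thesis using that[of j0 i0] ij0 by auto
      qed
      have pij: "p i \<noteq> j" using nopair ij by auto
      have Mpi: "M $ p i $ v = 0" using nopair ij by auto
      have ijS: "i \<in> S" "j \<in> S" "p i \<in> Rm" using ij RmS Rmp by auto
      have RRij: "RR i j" using RRnz[OF ij(1,4)] RRnz[OF ij(2,5)] RR_trans by blast
      obtain c where c: "c = 1 \<or> c = -1" "\<bar>M $ i $ v + c * M $ j $ v\<bar> < \<bar>M $ i $ v\<bar>"
        using euclid_step[OF ij(5,6)] by blast
      define d where "d = -(tau i * tau j * c)"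
      define t where "t = elem i j c ** elem (p j) (p i) d"
      have t: "t \<in> mgen TT" unfolding t_def d_def using op2[OF ijS(1,2) ij(3) pij RRij c(1)] .
      have e: "(t ** M) $ r $ s = (M $ r $ s + (if r = p j then d * M $ p i $ s else 0))
         + (if r = i then c * (M $ j $ s + (if j = p j then d * M $ p i $ s else 0)) else 0)" for r s
        unfolding t_def by (rule elem2_mult)
      have ev: "(t ** M) $ r $ v = M $ r $ v + (if r = i then c * M $ j $ v else 0)" for r
        using Mpi p_neq[of j] by (simp add: e)
      have tcol: "t $ k $ x = (if k = x then 1 else 0)" if "x \<notin> Rm" for x k
        unfolding t_def using that ij(2) ijS(3) by (intro prod_col allI elem_col) auto
      have cond': "cond Rm (t ** M)" using cond_step[OF less.prems(1) t tcol] by blast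
      have lt: "(\<Sum>k\<in>Rm. nat \<bar>(t ** M) $ k $ v\<bar>) < (\<Sum>k\<in>Rm. nat \<bar>M $ k $ v\<bar>)"
      proof (rule sum_decr[OF fin ij(1)])
        show "nat \<bar>(t ** M) $ i $ v\<bar> < nat \<bar>M $ i $ v\<bar>" using c(2) by (simp add: ev)
      qed (simp add: ev)
      have "t ** M \<in> mgen TT" using less.hyps[OF lt cond'] .
      then show ?thesis using reduce(2)[OF t] less.prems(1) by (simp add: cond_def)
    next
      case nottwo: False
      have "\<exists>w. M $ w $ v \<noteq> 0"
      proof (rule ccontr)
        assume "\<not> (\<exists>w. M $ w $ v \<noteq> 0)"
        then have z: "\<And>l. M $ l $ v = 0" by auto
        have "(matrix_inv M ** M) $ v $ v = 0" unfolding matrix_matrix_mult_def by (simp add: z)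
        then show False using mG_inv[OF hM(1)] by (simp add: mat1_entry)
      qed
      then obtain w where w: "M $ w $ v \<noteq> 0" by auto
      have wR: "w \<in> Rm" using zo w by blast
      have only: "\<forall>k. k \<noteq> w \<longrightarrow> M $ k $ v = 0"
        using nottwo wR w zo by blast
      show ?thesis
      proof (cases "w = v")
        case True then show ?thesis using phaseB[OF less.prems(1)] only by auto
      next
        case False show ?thesis using phaseB'[OF less.prems(1) wR False w only] .
      qed
    qed
  qed
qed

end

lemma main_ind: "Rm \<subseteq> S \<Longrightarrow> (\<forall>x\<in>Rm. p x \<in> Rm) \<Longrightarrow> cond Rm M \<Longrightarrow> M \<in> mgen TT"
proof (induction "card Rm" arbitrary: Rm M rule: less_induct)
  case less
  show ?case
  proof (cases "Rm = {}")
    case True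
    have "M = mat 1" using less.prems(3) True by (simp add: cond_def vec_eq_iff mat1_entry)
    then show ?thesis by (simp add: mgen.one)
  next
    case False
    obtain v where v: "v \<in> Rm" "\<And>i. i \<in> Rm \<Longrightarrow> RR i v \<Longrightarrow> RR v i"
      using exists_max[of Rm] False by auto
    show ?thesis
    proof (rule phaseA[of Rm v M])
      show "Rm \<subseteq> S" using less.prems by simp
      show "\<And>x. x \<in> Rm \<Longrightarrow> p x \<in> Rm" using less.prems by simp
      show "v \<in> Rm" using v by simp
      show "\<And>i. i \<in> Rm \<Longrightarrow> RR i v \<Longrightarrow> RR v i" using v by simp
      show "cond Rm M" using less.prems by simp
      fix M' assume M': "cond (Rm - {v, p v}) M'"
      have "card (Rm - {v, p v}) < card Rm" using v(1) by (intro psubset_card_mono) auto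
      moreover have "Rm - {v, p v} \<subseteq> S" using less.prems by auto
      moreover have "\<forall>x\<in>Rm - {v, p v}. p x \<in> Rm - {v, p v}" using less.prems by (auto simp: p_inj)
      ultimately show "M' \<in> mgen TT" using less.hyps M' by blast
    qed
  qed
qed

lemma result: "{A \<in> mgen GG. act2 A Q = Q} = mgen TT"
proof
  show "{A \<in> mgen GG. act2 A Q = Q} \<subseteq> mgen TT"
  proof
    fix A assume A: "A \<in> {A \<in> mgen GG. act2 A Q = Q}"
    have "cond S A" using A supp_out by (auto simp: cond_def LL_def)
    then show "A \<in> mgen TT" using main_ind[of S A] by (simp add: S_p)
  qed
  show "mgen TT \<subseteq> {A \<in> mgen GG. act2 A Q = Q}" using mTT_sub by blast
qed

end

theorem theorem4p4:
  fixes adj :: "'v::finite \<Rightarrow> 'v \<Rightarrow> bool"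
    and st :: "'v letter \<Rightarrow> 'v letter"
    and g :: nat
    and a :: "nat \<Rightarrow> 'v letter"
  assumes "is_graph adj"
    and "CARD('v) = 2 * g"
    and "bij st"
    and "\<And>u. st (st u) = linv u"
    and "fst ` (a ` {..<g} \<union> st ` a ` {..<g}) = UNIV"
    and "Qform adj st g a \<noteq> 0"
  shows "{A \<in> mgen (Ggens adj (Qform adj st g a)).
            act2 A (Qform adj st g a) = Qform adj st g a}
         = mgen (std_transv adj st (Qform adj st g a) \<union> Q_inversions st (Qform adj st g a))"
proof -
  interpret setting adj st g a using assms by (unfold_locales) auto
  show ?thesis by (rule result)
qed

end
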